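(* Let $k$ be a positive integer and $G$ a graph. Then $\gamma_{P,k}(G-e)>\gamma_{P,k}(G)$ for every edge $e$ of $G$ if and only if $G$ is a disjoint union of $k$-generalized spiders.
   Context: All graphs are finite and simple; $G-e$ is obtained by deleting the edge $e$. A $k$-generalized spider is a tree with at most one vertex of degree $k+2$ or more. $N_G[v]$ is the closed neighbourhood of $v$, and $N_G[S]$ the union of closed neighbourhoods of vertices of $S$. For $S\subseteq V(G)$, define $\mathcal{P}^{0}_{G,k}(S)=N_G[S]$ and $\mathcal{P}^{i+1}_{G,k}(S)=\bigcup\{N_G[v] : v\in \mathcal{P}^{i}_{G,k}(S),\ |N_G[v]\setminus \mathcal{P}^{i}_{G,k}(S)|\le k\}$; these increase and stabilize to $\mathcal{P}^{\infty}_{G,k}(S)$. $S$ is a $k$-power dominating set if $\mathcal{P}^{\infty}_{G,k}(S)=V(G)$; $\gamma_{P,k}(G)$ is the minimum size of such a set. *)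

theory Defs
  imports Main
begin

definition simple_graph :: "'a set \<Rightarrow> 'a set set \<Rightarrow> bool" where
  "simple_graph V E \<longleftrightarrow> finite V \<and> (\<forall>e\<in>E. e \<subseteq> V \<and> card e = 2)"

definition adj :: "'a set set \<Rightarrow> 'a \<Rightarrow> 'a \<Rightarrow> bool" where
  "adj E u v \<longleftrightarrow> {u, v} \<in> E"

definition del_edge :: "'a set set \<Rightarrow> 'a set \<Rightarrow> 'a set set" where
  "del_edge E e = E - {e}"

definition cnbhd :: "'a set set \<Rightarrow> 'a \<Rightarrow> 'a set" where
  "cnbhd E v = insert v {u. adj E v u}"

definition cnbhd_set :: "'a set set \<Rightarrow> 'a set \<Rightarrow> 'a set" where
  "cnbhd_set E S = (\<Union>v\<in>S. cnbhd E v)"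

primrec pow_obs :: "'a set set \<Rightarrow> nat \<Rightarrow> nat \<Rightarrow> 'a set \<Rightarrow> 'a set" where
  "pow_obs E k 0 S = cnbhd_set E S"
| "pow_obs E k (Suc i) S =
     \<Union>{cnbhd E v | v. v \<in> pow_obs E k i S \<and> card (cnbhd E v - pow_obs E k i S) \<le> k}"

definition pow_obs_inf :: "'a set set \<Rightarrow> nat \<Rightarrow> 'a set \<Rightarrow> 'a set" where
  "pow_obs_inf E k S = (\<Union>i. pow_obs E k i S)"

definition k_pds :: "'a set \<Rightarrow> 'a set set \<Rightarrow> nat \<Rightarrow> 'a set \<Rightarrow> bool" where
  "k_pds V E k S \<longleftrightarrow> S \<subseteq> V \<and> pow_obs_inf E k S = V"

definition gamma_pk :: "'a set \<Rightarrow> 'a set set \<Rightarrow> nat \<Rightarrow> nat" where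
  "gamma_pk V E k = (LEAST n. \<exists>S. k_pds V E k S \<and> card S = n)"

definition degree :: "'a set set \<Rightarrow> 'a \<Rightarrow> nat" where
  "degree E v = card {u. adj E v u}"

definition graph_connected :: "'a set \<Rightarrow> 'a set set \<Rightarrow> bool" where
  "graph_connected V E \<longleftrightarrow> (\<forall>u\<in>V. \<forall>v\<in>V. (adj E)\<^sup>*\<^sup>* u v)"

definition has_cycle :: "'a set \<Rightarrow> 'a set set \<Rightarrow> bool" where
  "has_cycle V E \<longleftrightarrow> (\<exists>xs. length xs \<ge> 3 \<and> distinct xs \<and> set xs \<subseteq> V \<and>
      (\<forall>i < length xs. adj E (xs ! i) (xs ! ((i + 1) mod length xs))))"

definition is_tree :: "'a set \<Rightarrow> 'a set set \<Rightarrow> bool" where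
  "is_tree V E \<longleftrightarrow> simple_graph V E \<and> V \<noteq> {} \<and> graph_connected V E \<and> \<not> has_cycle V E"

definition gen_spider :: "nat \<Rightarrow> 'a set \<Rightarrow> 'a set set \<Rightarrow> bool" where
  "gen_spider k V E \<longleftrightarrow> is_tree V E \<and> card {v\<in>V. degree E v \<ge> k + 2} \<le> 1"

definition induced_edges :: "'a set set \<Rightarrow> 'a set \<Rightarrow> 'a set set" where
  "induced_edges E C = {e\<in>E. e \<subseteq> C}"

definition disjoint_union_of_spiders :: "nat \<Rightarrow> 'a set \<Rightarrow> 'a set set \<Rightarrow> bool" where
  "disjoint_union_of_spiders k V E \<longleftrightarrow>
     (\<exists>P. \<Union>P = V \<and> (\<forall>C\<in>P. \<forall>D\<in>P. C \<noteq> D \<longrightarrow> C \<inter> D = {}) \<and>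
          (\<forall>e\<in>E. \<exists>C\<in>P. e \<subseteq> C) \<and>
          (\<forall>C\<in>P. gen_spider k C (induced_edges E C)))"

end

theory Submission
  imports Defs
begin


lemma adj_sym: "adj E u v = adj E v u"
  by (simp add: adj_def insert_commute)

lemma adj_in_V: "simple_graph V E \<Longrightarrow> adj E u v \<Longrightarrow> u \<in> V \<and> v \<in> V"
  unfolding simple_graph_def adj_def by blast

lemma adj_neq: "simple_graph V E \<Longrightarrow> adj E u v \<Longrightarrow> u \<noteq> v"
proof
  assume "simple_graph V E" "adj E u v" "u = v"
  then have "card {u, v} = 2" unfolding simple_graph_def adj_def by blast
  then show False using \<open>u = v\<close> by simp
qed

lemma nbrs_sub: assumes "simple_graph V E" shows "{u. adj E v u} \<subseteq> V"
  using adj_in_V[OF assms] by blast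

lemma nbrs_finite: assumes "simple_graph V E" shows "finite {u. adj E v u}"
proof -
  have "finite V" using assms by (simp add: simple_graph_def)
  then show ?thesis using nbrs_sub[OF assms] by (rule finite_subset[rotated])
qed

lemma cnbhd_finite: assumes "simple_graph V E" shows "finite (cnbhd E v)"
  unfolding cnbhd_def using nbrs_finite[OF assms, of v] by (rule finite.insertI)

lemma cnbhd_sub: assumes "simple_graph V E" "v \<in> V" shows "cnbhd E v \<subseteq> V"
  unfolding cnbhd_def using nbrs_sub[OF assms(1), of v] assms(2) by (rule insert_subsetI[rotated])

lemma pow_obs_step: "v \<in> pow_obs E k i S \<Longrightarrow> card (cnbhd E v - pow_obs E k i S) \<le> k
   \<Longrightarrow> cnbhd E v \<subseteq> pow_obs E k (Suc i) S"
  by auto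

lemma pow_obs_Suc_mono: "pow_obs E k i S \<subseteq> pow_obs E k (Suc i) S"
proof (induction i)
  case 0
  show ?case
  proof
    fix w assume "w \<in> pow_obs E k 0 S"
    then obtain s where s: "s \<in> S" "w \<in> cnbhd E s" by (auto simp: cnbhd_set_def)
    have "s \<in> cnbhd_set E S" using s unfolding cnbhd_set_def cnbhd_def by auto
    moreover have "cnbhd E s - cnbhd_set E S = {}" using s unfolding cnbhd_set_def by auto
    ultimately have d: "cnbhd E s - pow_obs E k 0 S = {}" "s \<in> pow_obs E k 0 S" by auto
    then have c: "card (cnbhd E s - pow_obs E k 0 S) \<le> k" by (simp only: card.empty)
    show "w \<in> pow_obs E k (Suc 0) S" by (rule subsetD[OF pow_obs_step[OF d(2) c] s(2)])
  qed
next
  case (Suc i)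
  show ?case
  proof
    fix w assume "w \<in> pow_obs E k (Suc i) S"
    then obtain v where v: "v \<in> pow_obs E k i S" "card (cnbhd E v - pow_obs E k i S) \<le> k"
       "w \<in> cnbhd E v" by auto
    have a: "v \<in> pow_obs E k (Suc i) S" using v(1) Suc by (rule subsetD[rotated])
    have "cnbhd E v - pow_obs E k (Suc i) S = {}" using pow_obs_step[OF v(1,2)] by (simp only: Diff_eq_empty_iff)
    then have c: "card (cnbhd E v - pow_obs E k (Suc i) S) \<le> k" by (simp only: card.empty)
    show "w \<in> pow_obs E k (Suc (Suc i)) S" 
      by (rule subsetD[OF pow_obs_step[OF a c] v(3)])
  qed
qed

lemma pow_obs_mono: "i \<le> j \<Longrightarrow> pow_obs E k i S \<subseteq> pow_obs E k j S"
  by (rule lift_Suc_mono_le[of "\<lambda>i. pow_obs E k i S", OF pow_obs_Suc_mono])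

lemma pow_obs_Suc_elim: "w \<in> pow_obs E k (Suc i) S \<Longrightarrow>
   \<exists>v. v \<in> pow_obs E k i S \<and> card (cnbhd E v - pow_obs E k i S) \<le> k \<and> w \<in> cnbhd E v"
  by auto

lemma pow_obs_sub_V: assumes "simple_graph V E" "S \<subseteq> V" shows "pow_obs E k i S \<subseteq> V"
proof (induction i)
  case 0
  show ?case
  proof
    fix w assume "w \<in> pow_obs E k 0 S"
    then obtain v where "v \<in> S" "w \<in> cnbhd E v" by (auto simp: cnbhd_set_def)
    then show "w \<in> V" using assms cnbhd_sub[of V E v] by blast
  qed
next
  case (Suc i)
  show ?case
  proof
    fix w assume "w \<in> pow_obs E k (Suc i) S"
    from pow_obs_Suc_elim[OF this] obtain v where v: "v \<in> pow_obs E k i S" "w \<in> cnbhd E v" by blast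
    have "v \<in> V" using v(1) Suc by (rule subsetD[rotated])
    then show "w \<in> V" using assms(1) v(2) cnbhd_sub[of V E v] by blast
  qed
qed

lemma kpds_intro: "simple_graph V E \<Longrightarrow> S \<subseteq> V \<Longrightarrow> V \<subseteq> (\<Union>i. pow_obs E k i S) \<Longrightarrow> k_pds V E k S"
  unfolding k_pds_def pow_obs_inf_def using pow_obs_sub_V[of V E S k] by (intro conjI equalityI) (assumption, blast, assumption)

lemma simple_graph_del: "simple_graph V E \<Longrightarrow> simple_graph V (del_edge E e)"
  unfolding simple_graph_def del_edge_def by auto

lemma gamma_le: "k_pds V E k S \<Longrightarrow> gamma_pk V E k \<le> card S"
  unfolding gamma_pk_def by (rule Least_le) blast

lemma V_kpds: "simple_graph V E \<Longrightarrow> k_pds V E k V"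
  apply (rule kpds_intro, assumption, simp)
  apply (rule subsetI, rule UN_I[of 0], simp)
  by (auto simp: cnbhd_set_def cnbhd_def)

lemma gamma_ex: "simple_graph V E \<Longrightarrow> \<exists>S. k_pds V E k S \<and> card S = gamma_pk V E k"
  unfolding gamma_pk_def by (rule LeastI_ex) (use V_kpds in blast)

lemma gamma_ge: "simple_graph V E \<Longrightarrow> (\<And>S. k_pds V E k S \<Longrightarrow> n \<le> card S) \<Longrightarrow> n \<le> gamma_pk V E k"
proof -
  assume a: "simple_graph V E" and b: "\<And>S. k_pds V E k S \<Longrightarrow> n \<le> card S"
  obtain S where s: "k_pds V E k S" "card S = gamma_pk V E k" using gamma_ex[OF a] by blast
  show ?thesis using b[OF s(1)] s(2) by simp
qed

lemma closed_meets:
  assumes sg: "simple_graph V E" and pds: "k_pds V E k S"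
    and X: "X \<subseteq> V" "X \<noteq> {}" and cl: "\<And>x y. x \<in> X \<Longrightarrow> adj E x y \<Longrightarrow> y \<in> X"
  shows "S \<inter> X \<noteq> {}"
proof
  assume SX: "S \<inter> X = {}"
  have "pow_obs E k i S \<inter> X = {}" for i
  proof (induction i)
    case 0
    have "cnbhd E s \<inter> X = {}" if "s \<in> S" for s
    proof -
      have "y \<notin> X" if "adj E s y" for y using that \<open>s \<in> S\<close> SX cl[of y s] adj_sym[of E s y] by blast
      then show ?thesis using \<open>s \<in> S\<close> SX unfolding cnbhd_def by blast
    qed
    then show ?case by (auto simp: cnbhd_set_def)
  next
    case (Suc i)
    have "cnbhd E v \<inter> X = {}" if "v \<in> pow_obs E k i S" for v
    proof -
      have "y \<notin> X" if "adj E v y" for y using that \<open>v \<in> pow_obs E k i S\<close> Suc cl[of y v] adj_sym[of E v y] by blast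
      then show ?thesis using \<open>v \<in> pow_obs E k i S\<close> Suc unfolding cnbhd_def by blast
    qed
    then show ?case by auto
  qed
  then have "pow_obs_inf E k S \<inter> X = {}" unfolding pow_obs_inf_def by auto
  then show False using pds X unfolding k_pds_def by auto
qed



lemma rtranclp_adj_sym: "(adj F)\<^sup>*\<^sup>* x y \<Longrightarrow> (adj F)\<^sup>*\<^sup>* y x"
proof (induction rule: rtranclp_induct)
  case base then show ?case by simp
next
  case (step y z)
  have "adj F z y" using step(2) adj_sym by metis
  then show ?case using step(3) by (rule converse_rtranclp_into_rtranclp)
qed

lemma rtranclp_list:
  "R\<^sup>*\<^sup>* a b \<Longrightarrow> \<exists>xs. xs \<noteq> [] \<and> hd xs = a \<and> last xs = b \<and> successively R xs \<and> (\<forall>x\<in>set xs. R\<^sup>*\<^sup>* a x)"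
proof (induction rule: rtranclp_induct)
  case base
  show ?case by (intro exI[of _ "[a]"]) simp
next
  case (step y z)
  then obtain xs where xs: "xs \<noteq> []" "hd xs = a" "last xs = y" "successively R xs" "\<forall>x\<in>set xs. R\<^sup>*\<^sup>* a x"
    by blast
  have "successively R (xs @ [z])" using xs(1,3,4) step(2) by (simp add: successively_append_iff)
  moreover have "\<forall>x\<in>set (xs @ [z]). R\<^sup>*\<^sup>* a x" using xs(5) step(1,2) by auto
  ultimately show ?case using xs(1,2) by (intro exI[of _ "xs @ [z]"]) simp
qed

lemma shorten_walk:
  "successively R xs \<Longrightarrow> xs \<noteq> [] \<Longrightarrow>
   \<exists>ys. distinct ys \<and> ys \<noteq> [] \<and> hd ys = hd xs \<and> last ys = last xs \<and> successively R ys \<and> set ys \<subseteq> set xs"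
proof (induction "length xs" arbitrary: xs rule: less_induct)
  case less
  show ?case
  proof (cases "distinct xs")
    case True then show ?thesis using less.prems by blast
  next
    case False
    then obtain as y bs cs where d: "xs = as @ [y] @ bs @ [y] @ cs" using not_distinct_decomp by blast
    define zs where "zs = as @ [y] @ cs"
    have len: "length zs < length xs" using d zs_def by simp
    have s1: "successively R (as @ [y])" using less.prems(1) d
      by (simp add: successively_append_iff)
    have "successively R ((as @ y # bs) @ (y # cs))" using less.prems(1) d by simp
    then have s2: "successively R ([y] @ cs)" by (simp only: successively_append_iff append_Cons append_Nil)
    have "successively R zs" unfolding zs_def using s1 s2
      by (auto simp add: successively_append_iff)
    moreover have "zs \<noteq> []" "hd zs = hd xs" "last zs = last xs" "set zs \<subseteq> set xs"
      using d zs_def by (cases as; cases cs; auto)+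
    ultimately obtain ys where "distinct ys \<and> ys \<noteq> [] \<and> hd ys = hd zs \<and> last ys = last zs \<and> successively R ys \<and> set ys \<subseteq> set zs"
      using less.hyps[OF len] by blast
    then show ?thesis using \<open>hd zs = hd xs\<close> \<open>last zs = last xs\<close> \<open>set zs \<subseteq> set xs\<close>
      by (intro exI[of _ ys]) auto
  qed
qed

lemma walk_to_cycle:
  assumes p: "(adj (F - {{a,b}}))\<^sup>*\<^sup>* a b" and ab: "a \<noteq> b" and e: "{a,b} \<in> F"
    and W: "\<And>u. (adj (F - {{a,b}}))\<^sup>*\<^sup>* a u \<Longrightarrow> u \<in> W"
  shows "has_cycle W F"
proof -
  let ?R = "adj (F - {{a,b}})"
  obtain xs where xs: "xs \<noteq> []" "hd xs = a" "last xs = b" "successively ?R xs" "\<forall>x\<in>set xs. ?R\<^sup>*\<^sup>* a x"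
    using rtranclp_list[OF p] by blast
  obtain ys where ys: "distinct ys" "ys \<noteq> []" "hd ys = a" "last ys = b" "successively ?R ys" "set ys \<subseteq> set xs"
    using shorten_walk[OF xs(4,1)] xs(2,3) by metis
  have setW: "set ys \<subseteq> W" using ys(6) xs(5) W by blast
  have L2: "length ys \<ge> 2"
  proof (rule ccontr)
    assume "\<not> length ys \<ge> 2"
    moreover have "length ys \<noteq> 0" using ys(2) by simp
    ultimately have "length ys = 1" by linarith
    then obtain z where "ys = [z]" by (cases ys) auto
    then show False using ys(3,4) ab by simp
  qed
  have L3: "length ys \<ge> 3"
  proof (rule ccontr)
    assume "\<not> length ys \<ge> 3"
    then have "length ys = 2" using L2 by simp
    then obtain z1 z2 where z: "ys = [z1, z2]"
      by (cases ys; cases "tl ys") auto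
    then have "?R a b" using ys(3,4,5) by simp
    then show False unfolding adj_def by simp
  qed
  have cyc: "adj F (ys ! i) (ys ! ((i + 1) mod length ys))" if "i < length ys" for i
  proof (cases "Suc i < length ys")
    case True
    then have "?R (ys ! i) (ys ! Suc i)" using ys(5) by (simp add: successively_conv_nth)
    then show ?thesis using True unfolding adj_def by simp
  next
    case False
    then have i: "i = length ys - 1" using that by simp
    then have "i + 1 = length ys" using that by simp
    then have "(i + 1) mod length ys = 0" by simp
    moreover have "ys ! i = b" using i ys(2,4) by (simp add: last_conv_nth)
    moreover have "ys ! 0 = a" using ys(2,3) by (simp add: hd_conv_nth)
    ultimately show ?thesis using e unfolding adj_def by (simp add: insert_commute)
  qed
  show ?thesis unfolding has_cycle_def using L3 ys(1) setW cyc by blast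
qed



lemma propagate:
  assumes sg: "simple_graph V E" and c: "c \<in> S"
    and deg: "\<And>v. v \<in> V \<Longrightarrow> v \<notin> S \<Longrightarrow> degree E v \<le> k + 1"
    and p: "(adj E)\<^sup>*\<^sup>* c v"
  shows "\<exists>n. v \<in> pow_obs E k n S \<and> cnbhd E v \<subseteq> pow_obs E k (Suc n) S"
  using p
proof (induction rule: rtranclp_induct)
  case base
  have "cnbhd E c \<subseteq> pow_obs E k 0 S" using c by (auto simp: cnbhd_set_def)
  moreover have "c \<in> cnbhd E c" by (simp add: cnbhd_def)
  ultimately show ?case using pow_obs_Suc_mono[of E k 0 S] by (intro exI[of _ 0] conjI) auto
next
  case (step u v)
  then obtain n where n: "u \<in> pow_obs E k n S" "cnbhd E u \<subseteq> pow_obs E k (Suc n) S" by blast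
  have vin: "v \<in> pow_obs E k (Suc n) S" using n(2) step(2) by (auto simp: cnbhd_def)
  have "cnbhd E v \<subseteq> pow_obs E k (Suc (Suc n)) S"
  proof (cases "v \<in> S")
    case True
    then have "cnbhd E v \<subseteq> pow_obs E k 0 S" by (auto simp: cnbhd_set_def)
    then show ?thesis using pow_obs_mono[of 0 "Suc (Suc n)" E k S] by (rule order_trans) simp
  next
    case False
    have vV: "v \<in> V" using adj_in_V[OF sg step(2)] by blast
    have dv: "degree E v \<le> k + 1" using deg[OF vV False] .
    have uin: "u \<in> pow_obs E k (Suc n) S" using pow_obs_Suc_mono n(1) by (rule subsetD)
    have "adj E v u" using step(2) adj_sym[of E u v] by simp
    then have uN: "u \<in> {y. adj E v y}" by simp
    have sub: "cnbhd E v - pow_obs E k (Suc n) S \<subseteq> {y. adj E v y} - {u}"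
      using vin uin unfolding cnbhd_def by blast
    have fin: "finite {y. adj E v y}" by (rule nbrs_finite[OF sg])
    have "card (cnbhd E v - pow_obs E k (Suc n) S) \<le> card ({y. adj E v y} - {u})"
      using sub fin by (intro card_mono) auto
    also have "\<dots> = degree E v - 1" using uN fin by (simp add: degree_def)
    also have "\<dots> \<le> k" using dv by simp
    finally show ?thesis using vin by (intro pow_obs_step)
  qed
  then show ?case using vin by (intro exI[of _ "Suc n"] conjI)
qed

lemma adj_induced: "adj (induced_edges E C) x y \<longleftrightarrow> adj E x y \<and> {x, y} \<subseteq> C"
  unfolding adj_def induced_edges_def by simp

lemma rtranclp_induced_mono: "(adj (induced_edges E C))\<^sup>*\<^sup>* x y \<Longrightarrow> (adj E)\<^sup>*\<^sup>* x y"
proof -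
  assume a: "(adj (induced_edges E C))\<^sup>*\<^sup>* x y"
  have "adj (induced_edges E C) \<le> adj E" by (auto simp: adj_induced)
  then show ?thesis using a by (rule rtranclp_mono[THEN predicate2D])
qed



lemma spiders_imp:
  assumes sg: "simple_graph V E" and dus: "disjoint_union_of_spiders k V E" and eE: "e \<in> E"
  shows "gamma_pk V (del_edge E e) k > gamma_pk V E k"
proof -
  obtain P where hP: "\<Union>P = V \<and> (\<forall>C\<in>P. \<forall>D\<in>P. C \<noteq> D \<longrightarrow> C \<inter> D = {}) \<and>
          (\<forall>e\<in>E. \<exists>C\<in>P. e \<subseteq> C) \<and>
          (\<forall>C\<in>P. gen_spider k C (induced_edges E C))"
    using dus unfolding disjoint_union_of_spiders_def by (elim exE) (rule that)
  have PV: "\<Union>P = V" using hP by (rule conjunct1)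
  have Pdisj: "\<And>C D. C \<in> P \<Longrightarrow> D \<in> P \<Longrightarrow> C \<noteq> D \<Longrightarrow> C \<inter> D = {}"
    using hP[THEN conjunct2, THEN conjunct1] by simp
  have Pedge: "\<And>e. e \<in> E \<Longrightarrow> \<exists>C\<in>P. e \<subseteq> C"
    using hP[THEN conjunct2, THEN conjunct2, THEN conjunct1] by simp
  have Psp: "\<And>C. C \<in> P \<Longrightarrow> gen_spider k C (induced_edges E C)"
    using hP[THEN conjunct2, THEN conjunct2, THEN conjunct2] by simp
  have finV: "finite V" using sg by (simp add: simple_graph_def)
  have finP: "finite P"
  proof -
    have "P \<subseteq> Pow V" using PV by blast
    then show ?thesis using finV by (meson finite_Pow_iff finite_subset)
  qed
  have CV: "C \<subseteq> V" if "C \<in> P" for C using that PV by blast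
  have Cne: "C \<noteq> {}" if "C \<in> P" for C using Psp[OF that] unfolding gen_spider_def is_tree_def by blast
  have uniq: "C = D" if "C \<in> P" "D \<in> P" "x \<in> C" "x \<in> D" for C D x
    using Pdisj[OF that(1,2)] that(3,4) by blast
  have edge_in: "y \<in> C" if h: "C \<in> P" "x \<in> C" "adj E x y" for C x y
  proof -
    obtain D where D: "D \<in> P" "{x, y} \<subseteq> D" using Pedge[of "{x,y}"] h(3) unfolding adj_def by blast
    then have "D = C" using uniq[OF D(1) h(1)] h(2) by blast
    then show ?thesis using D by blast
  qed
  have deg_ind: "degree (induced_edges E C) v = degree E v" if "C \<in> P" "v \<in> C" for C v
  proof -
    have "{u. adj (induced_edges E C) v u} = {u. adj E v u}"
      using edge_in[OF that] that(2) by (auto simp: adj_induced)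
    then show ?thesis by (simp add: degree_def)
  qed
  define cen where "cen C = (if \<exists>v\<in>C. k + 2 \<le> degree E v then SOME v. v \<in> C \<and> k + 2 \<le> degree E v
                             else SOME v. v \<in> C)" for C
  have cenC: "cen C \<in> C" if "C \<in> P" for C
  proof (cases "\<exists>v\<in>C. k + 2 \<le> degree E v")
    case True
    then have "cen C \<in> C \<and> k + 2 \<le> degree E (cen C)" unfolding cen_def
      by (simp only: if_True) (rule someI_ex, blast)
    then show ?thesis by blast
  next
    case False
    then have "cen C = (SOME v. v \<in> C)" unfolding cen_def by simp
    then show ?thesis using Cne[OF that] by (simp add: some_in_eq)
  qed
  have hi: "v = cen C" if "C \<in> P" "v \<in> C" "k + 2 \<le> degree E v" for C v
  proof -
    let ?H = "{v\<in>C. degree (induced_edges E C) v \<ge> k + 2}"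
    have c1: "card ?H \<le> 1" using Psp[OF that(1)] unfolding gen_spider_def by blast
    have finC: "finite C" using CV[OF that(1)] finV by (rule finite_subset)
    have finH: "finite ?H" by (rule finite_subset[OF _ finC]) blast
    have ex: "\<exists>v\<in>C. k + 2 \<le> degree E v" using that(2,3) by blast
    then have "cen C \<in> C \<and> k + 2 \<le> degree E (cen C)" unfolding cen_def
      by (simp only: if_True) (rule someI_ex, blast)
    then have "cen C \<in> ?H" using deg_ind[OF that(1)] by simp
    moreover have "v \<in> ?H" using that deg_ind[OF that(1,2)] by simp
    moreover have "\<forall>a1\<in>?H. \<forall>a2\<in>?H. a1 = a2" using c1 card_le_Suc0_iff_eq[OF finH] by simp
    ultimately show ?thesis by blast
  qed
  define S0 where "S0 = cen ` P"
  have S0V: "S0 \<subseteq> V" unfolding S0_def using cenC CV by blast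
  have degS0: "degree E v \<le> k + 1" if h: "v \<in> V" "v \<notin> S0" for v
  proof (rule ccontr)
    assume "\<not> degree E v \<le> k + 1"
    then have d: "k + 2 \<le> degree E v" by simp
    obtain C where C: "C \<in> P" "v \<in> C" using h(1) PV by blast
    then have "v = cen C" using hi[OF C d] by simp
    then show False using h(2) C(1) unfolding S0_def by blast
  qed
  have cover: "v \<in> (\<Union>i. pow_obs E k i S0)" if h: "v \<in> V" for v
  proof -
    obtain C where C: "C \<in> P" "v \<in> C" using h PV by blast
    have "graph_connected C (induced_edges E C)" using Psp[OF C(1)]
      unfolding gen_spider_def is_tree_def by blast
    then have "(adj (induced_edges E C))\<^sup>*\<^sup>* (cen C) v" using cenC[OF C(1)] C(2)
      unfolding graph_connected_def by blast
    then have p: "(adj E)\<^sup>*\<^sup>* (cen C) v" by (rule rtranclp_induced_mono)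
    have "cen C \<in> S0" unfolding S0_def using C(1) by blast
    then obtain n where "v \<in> pow_obs E k n S0"
      using propagate[OF sg _ degS0 p] by blast
    then show ?thesis by blast
  qed
  have pds0: "k_pds V E k S0" using kpds_intro[OF sg S0V] cover by blast
  have up: "gamma_pk V E k \<le> card P"
  proof -
    have "gamma_pk V E k \<le> card S0" by (rule gamma_le[OF pds0])
    also have "\<dots> \<le> card P" unfolding S0_def by (rule card_image_le[OF finP])
    finally show ?thesis .
  qed
  obtain C0 where C0: "C0 \<in> P" "e \<subseteq> C0" using Pedge[OF eE] by blast
  have "card e = 2" using sg eE unfolding simple_graph_def by blast
  then obtain a b where ab: "e = {a, b}" "a \<noteq> b" by (meson card_2_iff)
  define E' where "E' = del_edge E e"
  have sg': "simple_graph V E'" unfolding E'_def by (rule simple_graph_del[OF sg])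
  have adjE': "adj E x y" if "adj E' x y" for x y using that unfolding E'_def adj_def del_edge_def by simp
  define A where "A = {u. (adj E')\<^sup>*\<^sup>* a u}"
  define B where "B = {u. (adj E')\<^sup>*\<^sup>* b u}"
  have aC0: "a \<in> C0" "b \<in> C0" using C0(2) ab(1) by auto
  have inblk: "u \<in> C" if "C \<in> P" "x \<in> C" "(adj E')\<^sup>*\<^sup>* x u" for C x u
    using that(3)
  proof (induction rule: rtranclp_induct)
    case base then show ?case using that(2) .
  next
    case (step y z) then show ?case using edge_in[OF that(1)] adjE' by blast
  qed
  have AC0: "A \<subseteq> C0" unfolding A_def using inblk[OF C0(1) aC0(1)] by blast
  have BC0: "B \<subseteq> C0" unfolding B_def using inblk[OF C0(1) aC0(2)] by blast
  have aA: "a \<in> A" unfolding A_def by simp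
  have bB: "b \<in> B" unfolding B_def by simp
  have noab: "\<not> (adj E')\<^sup>*\<^sup>* a b"
  proof
    assume p: "(adj E')\<^sup>*\<^sup>* a b"
    let ?F = "induced_edges E C0"
    have eF: "{a, b} \<in> ?F" using eE C0(2) ab(1) unfolding induced_edges_def by blast
    have conv: "(adj (?F - {{a,b}}))\<^sup>*\<^sup>* a u" if "(adj E')\<^sup>*\<^sup>* a u" for u
      using that
    proof (induction rule: rtranclp_induct)
      case base then show ?case by simp
    next
      case (step y z)
      have "y \<in> C0" using inblk[OF C0(1) aC0(1) step(1)] .
      moreover have "z \<in> C0" using inblk[OF C0(1) aC0(1)] step(1,2) by (meson rtranclp.rtrancl_into_rtrancl)
      ultimately have "adj (?F - {{a,b}}) y z" using step(2) ab(1)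
        unfolding E'_def adj_def del_edge_def induced_edges_def by simp
      then show ?case using step(3) by (rule rtranclp.rtrancl_into_rtrancl[rotated])
    qed
    have W: "u \<in> C0" if "(adj (?F - {{a,b}}))\<^sup>*\<^sup>* a u" for u
    proof -
      have "(adj E)\<^sup>*\<^sup>* a u" using that
      proof (induction rule: rtranclp_induct)
        case base then show ?case by simp
      next
        case (step y z)
        have "adj E y z" using step(2) unfolding adj_def induced_edges_def by simp
        then show ?case using step(3) by (rule rtranclp.rtrancl_into_rtrancl[rotated])
      qed
      have "adj E' = adj E'" ..
      show ?thesis using that
      proof (induction rule: rtranclp_induct)
        case base then show ?case using aC0(1) .
      next
        case (step y z)
        then show ?case unfolding adj_def induced_edges_def by blast
      qed
    qed
    have "has_cycle C0 ?F" by (rule walk_to_cycle[OF conv[OF p] ab(2) eF W])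
    then show False using Psp[OF C0(1)] unfolding gen_spider_def is_tree_def by blast
  qed
  have AB: "A \<inter> B = {}"
  proof (rule ccontr)
    assume "A \<inter> B \<noteq> {}"
    then obtain u where "(adj E')\<^sup>*\<^sup>* a u" "(adj E')\<^sup>*\<^sup>* b u" unfolding A_def B_def by blast
    then have "(adj E')\<^sup>*\<^sup>* a b" using rtranclp_adj_sym[of E' b u] by (meson rtranclp_trans)
    then show False using noab by blast
  qed
  define F where "F = insert A (insert B (P - {C0}))"
  have Fsub: "X \<subseteq> V" if "X \<in> F" for X
    using that AC0 BC0 CV C0(1) unfolding F_def by blast
  have Fne: "X \<noteq> {}" if "X \<in> F" for X
    using that aA bB Cne unfolding F_def by blast
  have Fcl: "y \<in> X" if "X \<in> F" "x \<in> X" "adj E' x y" for X x y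
  proof -
    have "X = A \<or> X = B \<or> X \<in> P" using that(1) unfolding F_def by blast
    then show ?thesis
    proof (elim disjE)
      assume "X = A" then show ?thesis using that(2,3) unfolding A_def
        by (simp add: rtranclp.rtrancl_into_rtrancl)
    next
      assume "X = B" then show ?thesis using that(2,3) unfolding B_def
        by (simp add: rtranclp.rtrancl_into_rtrancl)
    next
      assume "X \<in> P" then show ?thesis using edge_in that(2) adjE'[OF that(3)] by blast
    qed
  qed
  have Fdisj: "X \<inter> Y = {}" if "X \<in> F" "Y \<in> F" "X \<noteq> Y" for X Y
  proof -
    have dA: "A \<inter> D = {}" if "D \<in> P - {C0}" for D using AC0 Pdisj[OF C0(1), of D] that by blast
    have dB: "B \<inter> D = {}" if "D \<in> P - {C0}" for D using BC0 Pdisj[OF C0(1), of D] that by blast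
    have "X = A \<or> X = B \<or> X \<in> P - {C0}" using that(1) unfolding F_def by simp
    moreover have "Y = A \<or> Y = B \<or> Y \<in> P - {C0}" using that(2) unfolding F_def by simp
    ultimately show ?thesis
    proof (elim disjE)
      assume "X = A" "Y = A" then show ?thesis using that(3) by simp
    next
      assume "X = A" "Y = B" then show ?thesis using AB by simp
    next
      assume "X = A" "Y \<in> P - {C0}" then show ?thesis using dA by simp
    next
      assume "X = B" "Y = A" then show ?thesis using AB by (simp add: Int_commute)
    next
      assume "X = B" "Y = B" then show ?thesis using that(3) by simp
    next
      assume "X = B" "Y \<in> P - {C0}" then show ?thesis using dB by simp
    next
      assume "X \<in> P - {C0}" "Y = A" then show ?thesis using dA[of X] by (simp add: Int_commute)
    next
      assume "X \<in> P - {C0}" "Y = B" then show ?thesis using dB[of X] by (simp add: Int_commute)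
    next
      assume "X \<in> P - {C0}" "Y \<in> P - {C0}" then show ?thesis using Pdisj that(3) by simp
    qed
  qed
  have finF: "finite F" unfolding F_def using finP by simp
  have AnB: "A \<noteq> B" using AB aA by blast
  have AnP: "A \<notin> P - {C0}"
  proof
    assume a: "A \<in> P - {C0}"
    then have "A \<inter> A = {}" using AC0 Pdisj[OF C0(1), of A] by blast
    then show False using aA by blast
  qed
  have BnP: "B \<notin> P - {C0}"
  proof
    assume a: "B \<in> P - {C0}"
    then have "B \<inter> B = {}" using BC0 Pdisj[OF C0(1), of B] by blast
    then show False using bB by blast
  qed
  have cardF: "card F = card P + 1"
  proof -
    have "card (P - {C0}) = card P - 1" using C0(1) finP by simp
    moreover have "0 < card P" using C0(1) finP card_gt_0_iff by blast
    then have "card P \<ge> 1" by simp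
    ultimately show ?thesis unfolding F_def using finP AnB AnP BnP by simp
  qed
  have low: "card P + 1 \<le> gamma_pk V E' k"
  proof (rule gamma_ge[OF sg'])
    fix S assume S: "k_pds V E' k S"
    have SV: "S \<subseteq> V" using S unfolding k_pds_def by blast
    have meet: "S \<inter> X \<noteq> {}" if "X \<in> F" for X
      by (rule closed_meets[OF sg' S Fsub[OF that] Fne[OF that] Fcl[OF that]])
    define f where "f X = (SOME x. x \<in> S \<inter> X)" for X
    have fX: "f X \<in> S \<inter> X" if "X \<in> F" for X
      unfolding f_def using meet[OF that] by (rule some_in_eq[THEN iffD2])
    have "inj_on f F"
    proof (rule inj_onI)
      fix X Y assume XY: "X \<in> F" "Y \<in> F" "f X = f Y"
      show "X = Y"
      proof (rule ccontr)
        assume "X \<noteq> Y"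
        then have d: "X \<inter> Y = {}" using Fdisj[OF XY(1,2)] by simp
        have "f X \<in> X" using fX[OF XY(1)] by simp
        moreover have "f X \<in> Y" using fX[OF XY(2)] XY(3) by simp
        ultimately show False using d by blast
      qed
    qed
    moreover have "f ` F \<subseteq> S" using fX by blast
    moreover have "finite S" using SV finV by (rule finite_subset)
    ultimately have "card F \<le> card S" by (rule card_inj_on_le)
    then show "card P + 1 \<le> card S" using cardF by simp
  qed
  show ?thesis using up low unfolding E'_def by simp
qed



lemma in_cnbhd_set_0: "s \<in> S \<Longrightarrow> s \<in> pow_obs E k 0 S"
  by (auto simp: cnbhd_set_def cnbhd_def)

lemma crit_imp_spiders:
  assumes sg: "simple_graph V E"
    and hyp: "\<forall>e\<in>E. gamma_pk V (del_edge E e) k > gamma_pk V E k"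
  shows "disjoint_union_of_spiders k V E"
proof -
  obtain S where pds: "k_pds V E k S" and cS: "card S = gamma_pk V E k" using gamma_ex[OF sg] by blast
  have SV: "S \<subseteq> V" using pds unfolding k_pds_def by blast
  have finV: "finite V" using sg by (simp add: simple_graph_def)
  have covered: "\<exists>i. w \<in> pow_obs E k i S" if "w \<in> V" for w
    using pds that unfolding k_pds_def pow_obs_inf_def by blast
  define t where "t w = (LEAST i. w \<in> pow_obs E k i S)" for w
  have t_in: "w \<in> pow_obs E k (t w) S" if "w \<in> V" for w
    unfolding t_def using covered[OF that] by (rule LeastI_ex)
  have t_le: "t w \<le> i" if "w \<in> pow_obs E k i S" for w i
    unfolding t_def using that by (rule Least_le)
  have t_S: "t s = 0" if "s \<in> S" for s using t_le[OF in_cnbhd_set_0[OF that]] by simp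
  define good where "good w v \<longleftrightarrow> adj E w v \<and> (if t w = 0 then v \<in> S else
      v \<in> pow_obs E k (t w - 1) S \<and> card (cnbhd E v - pow_obs E k (t w - 1) S) \<le> k)" for w v
  define par where "par w = (SOME v. good w v)" for w
  have par_good: "good w (par w)" if w: "w \<in> V" "w \<notin> S" for w
  proof -
    have "\<exists>v. good w v"
    proof (cases "t w = 0")
      case True
      then have "w \<in> cnbhd_set E S" using t_in[OF w(1)] by simp
      then obtain s where s: "s \<in> S" "w \<in> cnbhd E s" unfolding cnbhd_set_def by blast
      have "w \<noteq> s" using s(1) w(2) by blast
      then have "adj E s w" using s(2) unfolding cnbhd_def by simp
      then have "adj E w s" using adj_sym[of E s w] by simp
      then show ?thesis using True s(1) unfolding good_def by (intro exI[of _ s]) simp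
    next
      case False
      then obtain j where j: "t w = Suc j" by (cases "t w") auto
      then have "w \<in> pow_obs E k (Suc j) S" using t_in[OF w(1)] by simp
      from pow_obs_Suc_elim[OF this] obtain v where
        v: "v \<in> pow_obs E k j S" "card (cnbhd E v - pow_obs E k j S) \<le> k" "w \<in> cnbhd E v" by blast
      have "w \<notin> pow_obs E k j S" using t_le[of w j] j by auto
      then have "w \<noteq> v" using v(1) by blast
      then have "adj E v w" using v(3) unfolding cnbhd_def by simp
      then have "adj E w v" using adj_sym[of E v w] by simp
      then show ?thesis using j v(1,2) unfolding good_def by (intro exI[of _ v]) simp
    qed
    then show ?thesis unfolding par_def by (rule someI_ex)
  qed
  have par_adj: "adj E w (par w)" if "w \<in> V" "w \<notin> S" for w
    using par_good[OF that] unfolding good_def by simp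
  have parV: "par w \<in> V" if "w \<in> V" "w \<notin> S" for w
    using adj_in_V[OF sg par_adj[OF that]] by simp
  have edge_par: "\<exists>w. w \<in> V \<and> w \<notin> S \<and> e = {w, par w}" if eE: "e \<in> E" for e
  proof (rule ccontr)
    assume ne: "\<not> (\<exists>w. w \<in> V \<and> w \<notin> S \<and> e = {w, par w})"
    define E' where "E' = del_edge E e"
    have sg': "simple_graph V E'" unfolding E'_def by (rule simple_graph_del[OF sg])
    have adjE': "adj E x y" if "adj E' x y" for x y using that unfolding E'_def adj_def del_edge_def by simp
    have cnsub: "cnbhd E' v \<subseteq> cnbhd E v" for v unfolding cnbhd_def using adjE' by blast
    have keep: "adj E' w (par w)" if "w \<in> V" "w \<notin> S" for w
    proof -
      have "{w, par w} \<noteq> e" using ne that by blast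
      then show ?thesis using par_adj[OF that] unfolding E'_def adj_def del_edge_def by simp
    qed
    have main: "\<forall>w. w \<in> V \<and> t w = n \<longrightarrow> w \<in> pow_obs E' k n S" for n
    proof (induction n rule: less_induct)
      case (less n)
      have sub: "pow_obs E k j S \<subseteq> pow_obs E' k j S" if "j < n" for j
      proof
        fix u assume u: "u \<in> pow_obs E k j S"
        have uV: "u \<in> V" using pow_obs_sub_V[OF sg SV] u by blast
        have tu: "t u \<le> j" using t_le[OF u] .
        then have "u \<in> pow_obs E' k (t u) S" using less.IH[of "t u"] that uV by simp
        then show "u \<in> pow_obs E' k j S" using pow_obs_mono[OF tu, of E' k S] by blast
      qed
      show ?case
      proof (intro allI impI)
        fix w assume w: "w \<in> V \<and> t w = n"
        show "w \<in> pow_obs E' k n S"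
        proof (cases "w \<in> S")
          case True
          then show ?thesis using in_cnbhd_set_0[OF True] pow_obs_mono[of 0 n E' k S] by blast
        next
          case False
          have g: "good w (par w)" using par_good[OF conjunct1[OF w] False] .
          have kp: "adj E' w (par w)" using keep[OF conjunct1[OF w] False] .
          then have kp': "w \<in> cnbhd E' (par w)" using adj_sym[of E' w "par w"] unfolding cnbhd_def by simp
          show ?thesis
          proof (cases "t w = 0")
            case True
            then have "par w \<in> S" using g unfolding good_def by simp
            then have "cnbhd E' (par w) \<subseteq> pow_obs E' k 0 S" by (auto simp: cnbhd_set_def)
            then show ?thesis using kp' pow_obs_mono[of 0 n E' k S] by blast
          next
            case False
            then obtain j where j: "t w = Suc j" by (cases "t w") auto
            have nj: "n = Suc j" using w j by simp
            let ?v = "par w"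
            have v1: "?v \<in> pow_obs E k j S" and v2: "card (cnbhd E ?v - pow_obs E k j S) \<le> k"
              using g j unfolding good_def by simp_all
            have sj: "pow_obs E k j S \<subseteq> pow_obs E' k j S" using sub nj by simp
            have v1': "?v \<in> pow_obs E' k j S" using sj v1 by blast
            have "cnbhd E' ?v - pow_obs E' k j S \<subseteq> cnbhd E ?v - pow_obs E k j S"
              using cnsub sj by blast
            then have "card (cnbhd E' ?v - pow_obs E' k j S) \<le> card (cnbhd E ?v - pow_obs E k j S)"
              using cnbhd_finite[OF sg, of ?v] by (intro card_mono) auto
            then have v2': "card (cnbhd E' ?v - pow_obs E' k j S) \<le> k" using v2 by linarith
            have "cnbhd E' ?v \<subseteq> pow_obs E' k (Suc j) S" by (rule pow_obs_step[OF v1' v2'])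
            then show ?thesis using kp' nj by blast
          qed
        qed
      qed
    qed
    have "V \<subseteq> (\<Union>i. pow_obs E' k i S)"
    proof
      fix w assume "w \<in> V"
      then have "w \<in> pow_obs E' k (t w) S" using main by blast
      then show "w \<in> (\<Union>i. pow_obs E' k i S)" by blast
    qed
    then have "k_pds V E' k S" by (rule kpds_intro[OF sg' SV])
    then have "gamma_pk V E' k \<le> gamma_pk V E k" using gamma_le cS by metis
    then show False using hyp eE unfolding E'_def by force
  qed
  define h where "h w = 2 * t w + (if w \<in> S then 0 else 1)" for w
  have h_par: "h (par w) < h w" if w: "w \<in> V" "w \<notin> S" for w
  proof (cases "t w = 0")
    case True
    then have "par w \<in> S" using par_good[OF w] unfolding good_def by simp
    then have "h (par w) = 0" unfolding h_def using t_S by simp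
    moreover have "h w = 1" unfolding h_def using True w(2) by simp
    ultimately show ?thesis by simp
  next
    case False
    then have "par w \<in> pow_obs E k (t w - 1) S" using par_good[OF w] unfolding good_def by simp
    then have "t (par w) \<le> t w - 1" by (rule t_le)
    then have "2 * t (par w) + 1 < 2 * t w + 1" using False by linarith
    then show ?thesis unfolding h_def using w(2) by (cases "par w \<in> S") simp_all
  qed
  have nbr_low: "x \<notin> S \<and> y = par x" if xy: "adj E x y" "h y \<le> h x" for x y
  proof -
    obtain w where w: "w \<in> V" "w \<notin> S" "{x, y} = {w, par w}" using edge_par[of "{x,y}"] xy(1)
      unfolding adj_def by blast
    then have "(x = w \<and> y = par w) \<or> (x = par w \<and> y = w)" by (simp add: doubleton_eq_iff)
    then show ?thesis
    proof
      assume "x = w \<and> y = par w" then show ?thesis using w by simp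
    next
      assume a: "x = par w \<and> y = w"
      then have "h x < h y" using h_par[OF w(1,2)] by simp
      then show ?thesis using xy(2) by simp
    qed
  qed
  have acyc: "\<not> has_cycle V E"
  proof
    assume "has_cycle V E"
    then obtain xs where xs: "length xs \<ge> 3" "distinct xs" "set xs \<subseteq> V"
      "\<And>i. i < length xs \<Longrightarrow> adj E (xs ! i) (xs ! ((i + 1) mod length xs))"
      unfolding has_cycle_def by blast
    define L where "L = length xs"
    have L3: "L \<ge> 3" using xs(1) L_def by simp
    define M where "M = Max (h ` set xs)"
    have ne: "set xs \<noteq> {}" using L3 L_def by auto
    have "M \<in> h ` set xs" unfolding M_def using ne by (intro Max_in) auto
    then obtain x where x: "x \<in> set xs" "h x = M" by blast
    then obtain m where m: "m < L" "xs ! m = x" unfolding L_def by (metis in_set_conv_nth)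
    have hmax: "h (xs ! i) \<le> h x" if "i < L" for i
    proof -
      have "xs ! i \<in> set xs" using that L_def by simp
      then show ?thesis unfolding x(2) M_def by (intro Max_ge) auto
    qed
    define i1 where "i1 = (if m + 1 < L then m + 1 else 0)"
    define i0 where "i0 = (if m = 0 then L - 1 else m - 1)"
    have i1L: "i1 < L" using L3 m(1) unfolding i1_def by simp
    have i0L: "i0 < L" using L3 m(1) unfolding i0_def by auto
    have "(m + 1) mod L = i1"
    proof (cases "m + 1 < L")
      case True then show ?thesis unfolding i1_def by simp
    next
      case False then have "m + 1 = L" using m(1) by linarith
      then show ?thesis unfolding i1_def by simp
    qed
    then have a1: "adj E x (xs ! i1)" using xs(4)[of m] m L_def by simp
    have "(i0 + 1) mod L = m"
    proof (cases "m = 0")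
      case True then have "i0 + 1 = L" unfolding i0_def using L3 by simp
      then show ?thesis using True by simp
    next
      case False then have "i0 + 1 = m" unfolding i0_def by simp
      then show ?thesis using m(1) by simp
    qed
    then have "adj E (xs ! i0) x" using xs(4)[of i0] i0L m L_def by simp
    then have a0: "adj E x (xs ! i0)" using adj_sym[of E "xs ! i0" x] by simp
    have "xs ! i1 = par x" using nbr_low[OF a1 hmax[OF i1L]] by simp
    moreover have "xs ! i0 = par x" using nbr_low[OF a0 hmax[OF i0L]] by simp
    ultimately have "xs ! i1 = xs ! i0" by simp
    then have "i1 = i0" using xs(2) i1L i0L L_def by (simp add: nth_eq_iff_index_eq)
    then show False unfolding i1_def i0_def using L3 m(1) by (auto split: if_splits)
  qed
  have hiS: "v \<in> S" if v: "v \<in> V" "k + 2 \<le> degree E v" for v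
  proof (rule ccontr)
    assume vS: "v \<notin> S"
    define Ch where "Ch = {y. adj E v y} - {par v}"
    have fin: "finite {y. adj E v y}" by (rule nbrs_finite[OF sg])
    have pin: "par v \<in> {y. adj E v y}" using par_adj[OF v(1) vS] by simp
    have cardCh: "card Ch = degree E v - 1" unfolding Ch_def degree_def using pin fin by simp
    have chil: "y \<in> V \<and> y \<notin> S \<and> par y = v" if y: "y \<in> Ch" for y
    proof -
      have ay: "adj E v y" "y \<noteq> par v" using y unfolding Ch_def by auto
      obtain w where w: "w \<in> V" "w \<notin> S" "{v, y} = {w, par w}" using edge_par[of "{v,y}"] ay(1)
        unfolding adj_def by blast
      then have "(v = w \<and> y = par w) \<or> (v = par w \<and> y = w)" by (simp add: doubleton_eq_iff)
      then show ?thesis using ay(2) w by auto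
    qed
    define Q where "Q j \<longleftrightarrow> v \<in> pow_obs E k j S \<and> card (cnbhd E v - pow_obs E k j S) \<le> k" for j
    have qy: "Q (t y - 1) \<and> y \<notin> pow_obs E k (t y - 1) S" if y: "y \<in> Ch" for y
    proof -
      have c: "y \<in> V" "y \<notin> S" "par y = v" using chil[OF y] by auto
      have g: "good y v" using par_good[OF c(1,2)] c(3) by simp
      have "t y \<noteq> 0" using g vS unfolding good_def by (cases "t y = 0") simp_all
      then have q: "Q (t y - 1)" using g unfolding good_def Q_def by simp
      have "y \<notin> pow_obs E k (t y - 1) S"
      proof
        assume "y \<in> pow_obs E k (t y - 1) S"
        then have "t y \<le> t y - 1" by (rule t_le)
        then show False using \<open>t y \<noteq> 0\<close> by simp
      qed
      then show ?thesis using q by simp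
    qed
    have "card Ch \<ge> 1" using cardCh v(2) by simp
    then have "Ch \<noteq> {}" by (cases "Ch = {}") simp_all
    then obtain y0 where y0: "y0 \<in> Ch" by blast
    define j0 where "j0 = (LEAST j. Q j)"
    have "Q (t y0 - 1)" using qy[OF y0] by (rule conjunct1)
    then have qj0: "Q j0" unfolding j0_def by (rule LeastI)
    have "Ch \<subseteq> cnbhd E v - pow_obs E k j0 S"
    proof
      fix y assume y: "y \<in> Ch"
      have "Q (t y - 1)" using qy[OF y] by (rule conjunct1)
      then have "j0 \<le> t y - 1" unfolding j0_def by (rule Least_le)
      then have "pow_obs E k j0 S \<subseteq> pow_obs E k (t y - 1) S" by (rule pow_obs_mono)
      then have "y \<notin> pow_obs E k j0 S" using qy[OF y] by blast
      moreover have "y \<in> cnbhd E v" using y unfolding Ch_def cnbhd_def by simp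
      ultimately show "y \<in> cnbhd E v - pow_obs E k j0 S" by simp
    qed
    then have "card Ch \<le> card (cnbhd E v - pow_obs E k j0 S)"
      using cnbhd_finite[OF sg, of v] by (intro card_mono) auto
    also have "\<dots> \<le> k" using qj0 unfolding Q_def by simp
    finally show False using cardCh v(2) by simp
  qed
  define par' where "par' w = (if w \<in> S then w else par w)" for w
  have par'V: "par' w \<in> V" if "w \<in> V" for w using that parV unfolding par'_def by simp
  have iterS: "(par' ^^ n) s = s" if "s \<in> S" for s n
    using that by (induction n) (simp_all add: par'_def)
  have reach: "(par' ^^ n) w \<in> S" if "w \<in> V" "h w \<le> n" for w n
    using that
  proof (induction n arbitrary: w)
    case 0
    then show ?case unfolding h_def by (cases "w \<in> S") simp_all
  next
    case (Suc n)
    have eq: "(par' ^^ Suc n) w = (par' ^^ n) (par' w)" by (simp only: funpow_Suc_right comp_apply)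
    show ?case
    proof (cases "w \<in> S")
      case True
      then show ?thesis using eq iterS[OF True] unfolding par'_def by simp
    next
      case False
      then have "par' w = par w" unfolding par'_def by simp
      moreover have "h (par w) \<le> n" using h_par[OF Suc.prems(1) False] Suc.prems(2) by simp
      ultimately show ?thesis using eq Suc.IH[OF parV[OF Suc.prems(1) False]] by simp
    qed
  qed
  define B where "B = Max (h ` V)"
  have hB: "h w \<le> B" if "w \<in> V" for w unfolding B_def using finV that by (intro Max_ge) auto
  define root where "root w = (par' ^^ B) w" for w
  have root_S: "root s = s" if "s \<in> S" for s unfolding root_def using iterS[OF that] .
  have root_par: "root (par' w) = root w" if "w \<in> V" for w
  proof -
    have r: "(par' ^^ B) w \<in> S" using reach[OF that hB[OF that]] .
    have "root (par' w) = (par' ^^ Suc B) w" unfolding root_def by (simp only: funpow_Suc_right comp_apply)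
    also have "\<dots> = par' ((par' ^^ B) w)" by simp
    also have "\<dots> = (par' ^^ B) w" using r unfolding par'_def by simp
    finally show ?thesis unfolding root_def .
  qed
  have root_adj: "root x = root y" if axy: "adj E x y" for x y
  proof -
    obtain w where w: "w \<in> V" "w \<notin> S" "{x, y} = {w, par w}" using edge_par[of "{x,y}"] axy
      unfolding adj_def by blast
    have "root w = root (par w)" using root_par[OF w(1)] w(2) unfolding par'_def by simp
    moreover have "(x = w \<and> y = par w) \<or> (x = par w \<and> y = w)" using w(3) by (simp add: doubleton_eq_iff)
    ultimately show ?thesis by auto
  qed
  have root_rt: "root x = root y" if "(adj E)\<^sup>*\<^sup>* x y" for x y
    using that by (induction rule: rtranclp_induct) (simp_all add: root_adj)
  define comp where "comp v = {u. (adj E)\<^sup>*\<^sup>* v u}" for v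
  have compV: "comp v \<subseteq> V" if "v \<in> V" for v
  proof
    fix u assume "u \<in> comp v"
    then have "(adj E)\<^sup>*\<^sup>* v u" unfolding comp_def by simp
    then show "u \<in> V"
    proof (induction rule: rtranclp_induct)
      case base then show ?case using that .
    next
      case (step y z) then show ?case using adj_in_V[OF sg step(2)] by simp
    qed
  qed
  have comp_cl: "y \<in> comp v" if "u \<in> comp v" "adj E u y" for u y v
    using that unfolding comp_def by (simp add: rtranclp.rtrancl_into_rtrancl)
  have comp_conn: "(adj E)\<^sup>*\<^sup>* u u'" if "u \<in> comp v" "u' \<in> comp v" for u u' v
  proof -
    have "(adj E)\<^sup>*\<^sup>* u v" using that(1) rtranclp_adj_sym unfolding comp_def by fastforce
    moreover have "(adj E)\<^sup>*\<^sup>* v u'" using that(2) unfolding comp_def by simp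
    ultimately show ?thesis by (rule rtranclp_trans)
  qed
  have comp_eq: "comp v = comp w" if "u \<in> comp v" "u \<in> comp w" for u v w
  proof -
    have "(adj E)\<^sup>*\<^sup>* v w"
    proof -
      have "(adj E)\<^sup>*\<^sup>* v u" using that(1) unfolding comp_def by simp
      moreover have "(adj E)\<^sup>*\<^sup>* u w" using that(2) rtranclp_adj_sym unfolding comp_def by fastforce
      ultimately show ?thesis by (rule rtranclp_trans)
    qed
    moreover have "(adj E)\<^sup>*\<^sup>* w v" using calculation by (rule rtranclp_adj_sym)
    ultimately show ?thesis unfolding comp_def by (auto intro: rtranclp_trans)
  qed
  define P where "P = comp ` V"
  have spider: "gen_spider k (comp v) (induced_edges E (comp v))" if vV: "v \<in> V" for v
  proof -
    let ?C = "comp v"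
    let ?F = "induced_edges E ?C"
    have CV: "?C \<subseteq> V" by (rule compV[OF vV])
    have finC: "finite ?C" using CV finV by (rule finite_subset)
    have sgC: "simple_graph ?C ?F" using sg finC unfolding simple_graph_def induced_edges_def by auto
    have vC: "v \<in> ?C" unfolding comp_def by simp
    have ind: "(adj ?F)\<^sup>*\<^sup>* x y" if "x \<in> ?C" "(adj E)\<^sup>*\<^sup>* x y" for x y
    proof -
      have "(adj ?F)\<^sup>*\<^sup>* x y \<and> y \<in> ?C" using that(2)
      proof (induction rule: rtranclp_induct)
        case base then show ?case using that(1) by simp
      next
        case (step y z)
        have zC: "z \<in> ?C" using comp_cl step by blast
        have "adj ?F y z" using step(2) step(3) zC unfolding adj_def induced_edges_def by simp
        then show ?case using step(3) zC by (meson rtranclp.rtrancl_into_rtrancl)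
      qed
      then show ?thesis by simp
    qed
    have conn: "graph_connected ?C ?F" unfolding graph_connected_def
      using ind comp_conn by blast
    have nocyc: "\<not> has_cycle ?C ?F"
    proof
      assume "has_cycle ?C ?F"
      then have "has_cycle V E" using CV unfolding has_cycle_def adj_def induced_edges_def by blast
      then show False using acyc by simp
    qed
    have degeq: "degree ?F u = degree E u" if "u \<in> ?C" for u
    proof -
      have "{y. adj ?F u y} = {y. adj E u y}"
        using that comp_cl[of u v] unfolding adj_def induced_edges_def by auto
      then show ?thesis unfolding degree_def by simp
    qed
    let ?H = "{u \<in> ?C. degree ?F u \<ge> k + 2}"
    have finH: "finite ?H" by (rule finite_subset[OF _ finC]) blast
    have "\<forall>a1\<in>?H. \<forall>a2\<in>?H. a1 = a2"
    proof (intro ballI)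
      fix a1 a2 assume a: "a1 \<in> ?H" "a2 \<in> ?H"
      have s1: "a1 \<in> S" using hiS[of a1] a(1) degeq[of a1] CV by auto
      have s2: "a2 \<in> S" using hiS[of a2] a(2) degeq[of a2] CV by auto
      have "root v = root a1" using a(1) root_rt unfolding comp_def by simp
      moreover have "root v = root a2" using a(2) root_rt unfolding comp_def by simp
      ultimately show "a1 = a2" using root_S[OF s1] root_S[OF s2] by simp
    qed
    then have "card ?H \<le> 1" using card_le_Suc0_iff_eq[OF finH] by simp
    moreover have "?C \<noteq> {}" using vC by blast
    ultimately show ?thesis unfolding gen_spider_def is_tree_def using sgC conn nocyc by simp
  qed
  have PU: "\<Union>P = V"
  proof
    show "\<Union>P \<subseteq> V" unfolding P_def using compV by blast
    show "V \<subseteq> \<Union>P"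
    proof
      fix v assume "v \<in> V"
      moreover have "v \<in> comp v" unfolding comp_def by simp
      ultimately show "v \<in> \<Union>P" unfolding P_def by blast
    qed
  qed
  have Pdisj: "\<forall>C\<in>P. \<forall>D\<in>P. C \<noteq> D \<longrightarrow> C \<inter> D = {}"
  proof (intro ballI impI)
    fix C D assume CD: "C \<in> P" "D \<in> P" "C \<noteq> D"
    show "C \<inter> D = {}"
    proof (rule ccontr)
      assume "C \<inter> D \<noteq> {}"
      then obtain u where u: "u \<in> C" "u \<in> D" by blast
      obtain v w where "C = comp v" "D = comp w" using CD(1,2) unfolding P_def by blast
      then show False using comp_eq[of u v w] u CD(3) by simp
    qed
  qed
  have Pedge: "\<forall>e\<in>E. \<exists>C\<in>P. e \<subseteq> C"
  proof
    fix e assume eE: "e \<in> E"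
    then have "card e = 2" using sg unfolding simple_graph_def by blast
    then obtain a b where ab: "e = {a, b}" by (meson card_2_iff)
    then have "adj E a b" using eE unfolding adj_def by simp
    then have aV: "a \<in> V" and "b \<in> comp a" using adj_in_V[OF sg] unfolding comp_def by auto
    moreover have "a \<in> comp a" unfolding comp_def by simp
    ultimately show "\<exists>C\<in>P. e \<subseteq> C" unfolding P_def using ab by blast
  qed
  have Psp: "\<forall>C\<in>P. gen_spider k C (induced_edges E C)" unfolding P_def using spider by blast
  show ?thesis unfolding disjoint_union_of_spiders_def using PU Pdisj Pedge Psp by blast
qed


theorem mainTheorem3:
  fixes V :: "'a set" and E :: "'a set set" and k :: nat
  assumes "simple_graph V E" and "k \<ge> 1"
  shows "(\<forall>e\<in>E. gamma_pk V (del_edge E e) k > gamma_pk V E k)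
         \<longleftrightarrow> disjoint_union_of_spiders k V E"
proof
  assume "\<forall>e\<in>E. gamma_pk V (del_edge E e) k > gamma_pk V E k"
  then show "disjoint_union_of_spiders k V E" by (rule crit_imp_spiders[OF assms(1)])
next
  assume d: "disjoint_union_of_spiders k V E"
  show "\<forall>e\<in>E. gamma_pk V (del_edge E e) k > gamma_pk V E k"
    using spiders_imp[OF assms(1) d] by blast
qed

end
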